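(* Let $T$ be a power bounded operator. Then $T\overset{d}{\prec} S$ if and only if the isometric asymptote of $T$ is not unitary.
   Context: $S$ denotes the simple unilateral shift, i.e. multiplication by the independent variable on the Hardy space $H^2$. For operators $T\in\mathcal L(\mathcal H)$, $R\in\mathcal L(\mathcal K)$, the notation $T\overset{d}{\prec} R$ means that there exists a transformation $X\in\mathcal L(\mathcal H,\mathcal K)$ with dense range such that $XT=RX$. An operator $T$ is power bounded if $\sup_{n\ge0}\|T^n\|<\infty$. For a power bounded operator $T$, the isometric asymptote $(X_{T,+},V)$ (in the sense of Kérchy) consists of an isometry $V$ and a canonical intertwining mapping $X_{T,+}$ realizing $T\overset{d}{\prec} V$, with the universality property that every intertwining of $T$ with an isometry factors through $X_{T,+}$; the isometry $V$ itself is also called the isometric asymptote of $T$. *)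

theory Defs
  imports "HOL-Analysis.Analysis"
begin

text \<open>The distribution has no complex inner product spaces, so we introduce them
  as type classes: a complex vector space structure compatible with the real one,
  a complex (sesquilinear, conjugate-linear in the first argument) inner product
  inducing the norm, and completeness.\<close>

class complex_vector = real_vector +
  fixes scaleC :: "complex \<Rightarrow> 'a \<Rightarrow> 'a" (infixr "*\<^sub>C" 75)
  assumes scaleC_add_right: "a *\<^sub>C (x + y) = a *\<^sub>C x + a *\<^sub>C y"
    and scaleC_add_left: "(a + b) *\<^sub>C x = a *\<^sub>C x + b *\<^sub>C x"
    and scaleC_scaleC: "a *\<^sub>C (b *\<^sub>C x) = (a * b) *\<^sub>C x"
    and scaleC_one: "1 *\<^sub>C x = x"
    and scaleR_scaleC: "scaleR r x = complex_of_real r *\<^sub>C x"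

class complex_inner = complex_vector + real_normed_vector +
  fixes cinner :: "'a \<Rightarrow> 'a \<Rightarrow> complex"
  assumes cinner_commute: "cinner x y = cnj (cinner y x)"
    and cinner_add_left: "cinner (x + y) z = cinner x z + cinner y z"
    and cinner_scaleC_left: "cinner (a *\<^sub>C x) y = cnj a * cinner x y"
    and cinner_self_norm: "cinner x x = complex_of_real ((norm x)\<^sup>2)"

class chilbert_space = complex_inner + complete_space

definition bounded_clinear :: "('a::complex_inner \<Rightarrow> 'b::complex_inner) \<Rightarrow> bool" where
  "bounded_clinear f \<longleftrightarrow> bounded_linear f \<and> (\<forall>c x. f (c *\<^sub>C x) = c *\<^sub>C f x)"

definition power_bounded :: "('a::complex_inner \<Rightarrow> 'a) \<Rightarrow> bool" where
  "power_bounded T \<longleftrightarrow> bounded_clinear T \<and> (\<exists>C. \<forall>n. onorm (T ^^ n) \<le> C)"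

definition isometry :: "('a::complex_inner \<Rightarrow> 'b::complex_inner) \<Rightarrow> bool" where
  "isometry V \<longleftrightarrow> bounded_clinear V \<and> (\<forall>x. norm (V x) = norm x)"

text \<open>A unitary operator is a surjective isometry (equivalently \<open>V\<^sup>* V = V V\<^sup>* = I\<close>).\<close>
definition unitary :: "('a::complex_inner \<Rightarrow> 'a) \<Rightarrow> bool" where
  "unitary V \<longleftrightarrow> isometry V \<and> surj V"

definition dense_intertwined ::
  "('a::complex_inner \<Rightarrow> 'a) \<Rightarrow> ('b::complex_inner \<Rightarrow> 'b) \<Rightarrow> bool" (infix "\<prec>\<^sub>d" 50) where
  "T \<prec>\<^sub>d R \<longleftrightarrow> (\<exists>X. bounded_clinear X \<and> closure (range X) = UNIV \<and> X \<circ> T = R \<circ> X)"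

definition cspan :: "'a::complex_vector set \<Rightarrow> 'a set" where
  "cspan A = {\<Sum>a\<in>F. c a *\<^sub>C a | F c. finite F \<and> F \<subseteq> A}"

text \<open>Simple unilateral shift: an isometry \<open>S\<close> for which some unit vector \<open>e\<close> makes
  \<open>(S\<^sup>n e)\<^sub>n\<close> an orthonormal basis (i.e. \<open>S\<close> is unitarily equivalent to
  multiplication by \<open>z\<close> on \<open>H\<^sup>2\<close>, with \<open>e\<close> corresponding to the constant \<open>1\<close>).\<close>
definition simple_unilateral_shift :: "('a::complex_inner \<Rightarrow> 'a) \<Rightarrow> bool" where
  "simple_unilateral_shift S \<longleftrightarrow> isometry S \<and>
     (\<exists>e. norm e = 1 \<and> (\<forall>n m. n \<noteq> m \<longrightarrow> cinner ((S ^^ n) e) ((S ^^ m) e) = 0)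
          \<and> closure (cspan (range (\<lambda>n. (S ^^ n) e))) = UNIV)"

text \<open>Since HOL cannot quantify over
  types inside a formula, universality is required for isometries \<open>W\<close> acting on spaces
  of the type given by the \<open>itself\<close> argument.\<close>
definition isometric_asymptote ::
  "('a::chilbert_space \<Rightarrow> 'a) \<Rightarrow> ('a \<Rightarrow> 'k::chilbert_space) \<Rightarrow> ('k \<Rightarrow> 'k)
     \<Rightarrow> 'e::chilbert_space itself \<Rightarrow> bool" where
  "isometric_asymptote T X V (_ :: 'e itself) \<longleftrightarrow>
     isometry V \<and> bounded_clinear X \<and> closure (range X) = UNIV \<and> X \<circ> T = V \<circ> X \<and>
     (\<forall>(W::'e \<Rightarrow> 'e) (Y::'a \<Rightarrow> 'e). isometry W \<and> bounded_clinear Y \<and> Y \<circ> T = W \<circ> Y \<longrightarrow>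
        (\<exists>!Z. bounded_clinear Z \<and> Z \<circ> V = W \<circ> Z \<and> Y = Z \<circ> X))"

end

theory Submission
  imports Defs
begin


lemma scaleC_zero_left[simp]: "(0::complex) *\<^sub>C (x::'a::complex_vector) = 0"
  by (metis of_real_0 scaleR_scaleC scaleR_zero_left)

lemma scaleC_zero_right[simp]: "a *\<^sub>C (0::'a::complex_vector) = 0"
  by (metis add_cancel_right_right add_0 scaleC_add_right)

lemma scaleC_minus_right: "a *\<^sub>C (- x::'a::complex_vector) = - (a *\<^sub>C x)"
  by (metis add.left_inverse scaleC_add_right scaleC_zero_right add_eq_0_iff)

lemma scaleC_minus_left: "(- a) *\<^sub>C (x::'a::complex_vector) = - (a *\<^sub>C x)"
  by (metis add.left_inverse scaleC_add_left scaleC_zero_left add_eq_0_iff)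

lemma scaleC_diff_right: "a *\<^sub>C (x - y::'a::complex_vector) = a *\<^sub>C x - a *\<^sub>C y"
  by (metis diff_conv_add_uminus scaleC_add_right scaleC_minus_right)

lemma scaleC_diff_left: "(a - b) *\<^sub>C (x::'a::complex_vector) = a *\<^sub>C x - b *\<^sub>C x"
  by (metis diff_conv_add_uminus scaleC_add_left scaleC_minus_left)

lemma scaleC_sum_right: "a *\<^sub>C sum (f::_\<Rightarrow>'a::complex_vector) F = (\<Sum>i\<in>F. a *\<^sub>C f i)"
  by (induction F rule: infinite_finite_induct) (auto simp: scaleC_add_right)

lemma scaleC_scaleR_commute: "a *\<^sub>C (r *\<^sub>R (x::'a::complex_vector)) = r *\<^sub>R (a *\<^sub>C x)"
  by (simp add: scaleR_scaleC scaleC_scaleC mult.commute)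

lemma cinner_zero_left[simp]: "cinner 0 (y::'a::complex_inner) = 0"
  by (metis add_0 add_cancel_right_right cinner_add_left)

lemma cinner_add_right: "cinner (x::'a::complex_inner) (y + z) = cinner x y + cinner x z"
  by (metis cinner_add_left cinner_commute complex_cnj_add)

lemma cinner_zero_right[simp]: "cinner (x::'a::complex_inner) 0 = 0"
  by (metis cinner_commute cinner_zero_left complex_cnj_zero)

lemma cinner_scaleC_right: "cinner (x::'a::complex_inner) (a *\<^sub>C y) = a * cinner x y"
  by (metis cinner_commute cinner_scaleC_left complex_cnj_cnj complex_cnj_mult)

lemma cinner_minus_left: "cinner (- x::'a::complex_inner) y = - cinner x y"
  by (metis add.left_inverse cinner_add_left cinner_zero_left add_eq_0_iff)

lemma cinner_minus_right: "cinner (x::'a::complex_inner) (- y) = - cinner x y"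
  by (metis add.left_inverse cinner_add_right cinner_zero_right add_eq_0_iff)

lemma cinner_diff_left: "cinner (x - y::'a::complex_inner) z = cinner x z - cinner y z"
  by (metis diff_conv_add_uminus cinner_add_left cinner_minus_left)

lemma cinner_diff_right: "cinner (x::'a::complex_inner) (y - z) = cinner x y - cinner x z"
  by (metis diff_conv_add_uminus cinner_add_right cinner_minus_right)

lemma cinner_sum_left: "cinner (sum f F) (y::'a::complex_inner) = (\<Sum>i\<in>F. cinner (f i) y)"
  by (induction F rule: infinite_finite_induct) (auto simp: cinner_add_left)

lemma cinner_sum_right: "cinner (y::'a::complex_inner) (sum f F) = (\<Sum>i\<in>F. cinner y (f i))"
  by (induction F rule: infinite_finite_induct) (auto simp: cinner_add_right)

lemma cinner_scaleR_left: "cinner (r *\<^sub>R x::'a::complex_inner) y = of_real r * cinner x y"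
  by (simp add: scaleR_scaleC cinner_scaleC_left)

lemma norm_scaleC: "norm (a *\<^sub>C (x::'a::complex_inner)) = cmod a * norm x"
proof -
  have "complex_of_real ((norm (a *\<^sub>C x))\<^sup>2) = cnj a * a * complex_of_real ((norm x)\<^sup>2)"
    by (metis cinner_self_norm cinner_scaleC_left cinner_scaleC_right mult.assoc)
  also have "cnj a * a = complex_of_real ((cmod a)\<^sup>2)"
    by (metis complex_norm_square mult.commute of_real_power)
  finally have "(norm (a *\<^sub>C x))\<^sup>2 = (cmod a * norm x)\<^sup>2"
    by (metis of_real_eq_iff of_real_mult power_mult_distrib)
  thus ?thesis by (simp add: power2_eq_iff_nonneg)
qed

lemma norm_add_sq: "(norm (x + y))\<^sup>2 = (norm x)\<^sup>2 + (norm y)\<^sup>2 + 2 * Re (cinner (x::'a::complex_inner) y)"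
proof -
  have "complex_of_real ((norm (x+y))\<^sup>2) = cinner (x+y) (x+y)"
    by (rule cinner_self_norm[symmetric])
  also have "\<dots> = cinner x x + cinner x y + cinner y x + cinner y y"
    by (simp add: cinner_add_left cinner_add_right)
  also have "\<dots> = complex_of_real ((norm x)\<^sup>2) + complex_of_real ((norm y)\<^sup>2) + cinner x y + cnj (cinner x y)"
    using cinner_commute[of y x] by (simp add: cinner_self_norm add_ac)
  finally have "complex_of_real ((norm (x+y))\<^sup>2) = \<dots>" .
  hence "Re (complex_of_real ((norm (x+y))\<^sup>2)) = Re (complex_of_real ((norm x)\<^sup>2) + complex_of_real ((norm y)\<^sup>2) + cinner x y + cnj (cinner x y))" by simp
  thus ?thesis by simp
qed

lemma norm_diff_sq: "(norm (x - y))\<^sup>2 = (norm x)\<^sup>2 + (norm y)\<^sup>2 - 2 * Re (cinner (x::'a::complex_inner) y)"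
  using norm_add_sq[of x "-y"] by (simp add: cinner_minus_right)

lemma cinner_self_zero: "cinner x (x::'a::complex_inner) = 0 \<longleftrightarrow> x = 0"
  by (simp add: cinner_self_norm)



subclass (in chilbert_space) banach ..

lemma bclin_add: "bounded_clinear f \<Longrightarrow> f (x + y) = f x + f y"
  unfolding bounded_clinear_def using linear_add bounded_linear.linear by blast

lemma bclin_scaleC: "bounded_clinear f \<Longrightarrow> f (c *\<^sub>C x) = c *\<^sub>C f x"
  unfolding bounded_clinear_def by blast

lemma bclin_bl: "bounded_clinear f \<Longrightarrow> bounded_linear f"
  unfolding bounded_clinear_def by blast

lemma bclin_0: "bounded_clinear f \<Longrightarrow> f 0 = 0"
  using bclin_bl linear_0 bounded_linear.linear by blast

lemma bclin_diff: "bounded_clinear f \<Longrightarrow> f (x - y) = f x - f y"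
  using bclin_bl linear_diff bounded_linear.linear by blast

lemma bclin_comp: "bounded_clinear f \<Longrightarrow> bounded_clinear g \<Longrightarrow> bounded_clinear (f \<circ> g)"
  unfolding bounded_clinear_def using bounded_linear_compose[of f g]
  by (auto simp: o_def)

lemma isometry_Re:
  assumes "isometry V"
  shows "Re (cinner (V x) (V y)) = Re (cinner x y)"
proof -
  have b: "bounded_clinear V" and n: "\<And>x. norm (V x) = norm x" using assms unfolding isometry_def by auto
  have "(norm (V x + V y))\<^sup>2 = (norm (x + y))\<^sup>2" using n bclin_add[OF b] by metis
  thus ?thesis using norm_add_sq[of "V x" "V y"] norm_add_sq[of x y] n by simp
qed

lemma isometry_cinner:
  assumes "isometry V"
  shows "cinner (V x) (V y) = cinner x y"
proof (rule complex_eqI)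
  show "Re (cinner (V x) (V y)) = Re (cinner x y)" by (rule isometry_Re[OF assms])
  have b: "bounded_clinear V" using assms unfolding isometry_def by auto
  have "Re (cinner (V (\<i> *\<^sub>C x)) (V y)) = Re (cinner (\<i> *\<^sub>C x) y)" by (rule isometry_Re[OF assms])
  thus "Im (cinner (V x) (V y)) = Im (cinner x y)"
    by (simp add: bclin_scaleC[OF b] cinner_scaleC_left)
qed

lemma isometry_funpow: fixes V :: "'a::complex_inner \<Rightarrow> 'a" assumes V: "isometry V" shows "cinner ((V ^^ n) x) ((V ^^ n) y) = cinner x y"
  by (induction n) (auto simp: isometry_cinner[OF V])

lemma isometry_bclin_funpow: "isometry (V::'a::complex_inner \<Rightarrow> 'a) \<Longrightarrow> bounded_clinear (V ^^ n)"
proof (induction n)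
  case 0
  show ?case using bounded_linear_ident unfolding bounded_clinear_def by (simp add: id_def)
next
  case (Suc n)
  then show ?case using bclin_comp[of V "V ^^ n"] by (simp add: isometry_def o_def)
qed

definition orthonormal :: "(nat \<Rightarrow> 'a::complex_inner) \<Rightarrow> bool" where
  "orthonormal u \<longleftrightarrow> (\<forall>n m. cinner (u n) (u m) = (if n = m then 1 else 0))"

lemma orthonormal_powers:
  fixes V :: "'a::complex_inner \<Rightarrow> 'a"
  assumes V: "isometry V" and e: "norm e = 1" and orth: "\<And>n m. n \<noteq> m \<Longrightarrow> cinner ((V ^^ n) e) ((V ^^ m) e) = 0"
  shows "orthonormal (\<lambda>n. (V ^^ n) e)"
  unfolding orthonormal_def
proof (intro allI)
  fix n m
  show "cinner ((V ^^ n) e) ((V ^^ m) e) = (if n = m then 1 else 0)"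
  proof (cases "n = m")
    case True
    have "cinner ((V ^^ n) e) ((V ^^ n) e) = cinner e e" by (rule isometry_funpow[OF V])
    then show ?thesis using True e by (simp add: cinner_self_norm)
  qed (simp add: orth)
qed

lemma orthonormal_iter:
  fixes V :: "'a::complex_inner \<Rightarrow> 'a"
  assumes V: "isometry V" and e: "norm e = 1" and perp: "\<And>k. cinner e (V k) = 0"
  shows "orthonormal (\<lambda>n. (V ^^ n) e)"
proof (rule orthonormal_powers[OF V e])
  have lt: "cinner ((V ^^ n) e) ((V ^^ m) e) = 0" if "n < m" for n m
  proof -
    obtain d where m: "m = n + Suc d" using \<open>n < m\<close> less_iff_Suc_add by (metis add.commute add_Suc_right)
    have "(V ^^ m) e = (V ^^ n) ((V ^^ Suc d) e)" by (simp only: m funpow_add o_apply)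
    also have "(V ^^ Suc d) e = V ((V ^^ d) e)" by simp
    finally have "(V ^^ m) e = (V ^^ n) (V ((V ^^ d) e))" .
    hence "cinner ((V ^^ n) e) ((V ^^ m) e) = cinner e (V ((V ^^ d) e))" by (simp add: isometry_funpow[OF V])
    thus ?thesis using perp by simp
  qed
  fix n m :: nat assume "n \<noteq> m"
  then consider "n < m" | "m < n" by linarith
  then show "cinner ((V ^^ n) e) ((V ^^ m) e) = 0"
  proof cases
    case 2 then show ?thesis using lt[OF 2] cinner_commute[of "(V ^^ n) e" "(V ^^ m) e"] by simp
  qed (rule lt)
qed

lemma cnj_mult_self: "cnj z * z = complex_of_real ((cmod z)\<^sup>2)"
  by (metis complex_norm_square mult.commute)

lemma sum_delta_mult:
  assumes "finite F"
  shows "(\<Sum>n\<in>F. f n * (if n = m then 1 else 0)) = (if m \<in> F then f m else (0::'b::semiring_1))"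
proof -
  have "(\<Sum>n\<in>F. f n * (if n = m then 1 else 0)) = (\<Sum>n\<in>F. if n = m then f n else 0)"
    by (rule sum.cong) auto
  thus ?thesis using assms by (simp add: sum.delta)
qed

lemma orthonormal_sum_cinner1:
  assumes "orthonormal w" "finite F" "m \<in> F"
  shows "cinner (\<Sum>n\<in>F. a n *\<^sub>C w n) (w m) = cnj (a m)"
proof -
  have "cinner (\<Sum>n\<in>F. a n *\<^sub>C w n) (w m) = (\<Sum>n\<in>F. cnj (a n) * (if n = m then 1 else 0))"
    using assms(1) by (simp add: cinner_sum_left cinner_scaleC_left orthonormal_def)
  also have "\<dots> = cnj (a m)" using assms(2,3) by (simp only: sum_delta_mult) simp
  finally show ?thesis .
qed

lemma orthonormal_sum_cinner:
  assumes "orthonormal w"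
  shows "cinner (\<Sum>n\<in>F. a n *\<^sub>C w n) (\<Sum>n\<in>F. b n *\<^sub>C w n) = (\<Sum>n\<in>F. cnj (a n) * b n)"
proof (cases "finite F")
  case True
  have "cinner (\<Sum>n\<in>F. a n *\<^sub>C w n) (\<Sum>n\<in>F. b n *\<^sub>C w n) = (\<Sum>m\<in>F. b m * cinner (\<Sum>n\<in>F. a n *\<^sub>C w n) (w m))"
    by (simp add: cinner_sum_right cinner_scaleC_right)
  also have "\<dots> = (\<Sum>m\<in>F. cnj (a m) * b m)"
    by (rule sum.cong) (simp_all add: orthonormal_sum_cinner1[OF assms True] mult.commute)
  finally show ?thesis .
qed simp

lemma orthonormal_norm_sum:
  assumes "orthonormal w"
  shows "(norm (\<Sum>n\<in>F. a n *\<^sub>C w n))\<^sup>2 = (\<Sum>n\<in>F. (cmod (a n))\<^sup>2)"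
proof -
  have "complex_of_real ((norm (\<Sum>n\<in>F. a n *\<^sub>C w n))\<^sup>2) = (\<Sum>n\<in>F. cnj (a n) * a n)"
    by (subst cinner_self_norm[symmetric]) (rule orthonormal_sum_cinner[OF assms])
  also have "\<dots> = complex_of_real (\<Sum>n\<in>F. (cmod (a n))\<^sup>2)"
    by (simp only: cnj_mult_self of_real_sum)
  finally show ?thesis using of_real_eq_iff by blast
qed

lemma bessel:
  assumes "orthonormal u"
  shows "(\<Sum>n\<in>F. (cmod (cinner (u n) k))\<^sup>2) \<le> (norm k)\<^sup>2"
proof (cases "finite F")
  case True
  define c where "c n = cinner (u n) k" for n
  define s where "s = (\<Sum>n\<in>F. c n *\<^sub>C u n)"
  have cs: "cinner s k = (\<Sum>n\<in>F. cnj (c n) * c n)"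
    by (simp add: s_def cinner_sum_left cinner_scaleC_left c_def)
  have ks: "cinner k s = (\<Sum>n\<in>F. cnj (c n) * c n)"
    using cs cinner_commute[of k s] by (simp add: mult.commute)
  have ss: "cinner s s = (\<Sum>n\<in>F. cnj (c n) * c n)"
    unfolding s_def by (rule orthonormal_sum_cinner[OF assms])
  have sq: "(\<Sum>n\<in>F. cnj (c n) * c n) = complex_of_real (\<Sum>n\<in>F. (cmod (c n))\<^sup>2)"
    by (simp only: cnj_mult_self of_real_sum)
  have "complex_of_real ((norm (k - s))\<^sup>2) = cinner k k - cinner k s - cinner s k + cinner s s"
    by (subst cinner_self_norm[symmetric]) (simp add: cinner_diff_left cinner_diff_right)
  also have "\<dots> = complex_of_real ((norm k)\<^sup>2 - (\<Sum>n\<in>F. (cmod (c n))\<^sup>2))"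
    by (simp only: cs ks ss sq) (simp add: cinner_self_norm)
  finally have "(norm (k - s))\<^sup>2 = (norm k)\<^sup>2 - (\<Sum>n\<in>F. (cmod (c n))\<^sup>2)"
    using of_real_eq_iff by blast
  hence "0 \<le> (norm k)\<^sup>2 - (\<Sum>n\<in>F. (cmod (c n))\<^sup>2)" by (metis zero_le_power2)
  thus ?thesis by (simp add: c_def)
qed simp



lemma parallelogram: "(norm (a + b))\<^sup>2 + (norm (a - b))\<^sup>2 = 2 * (norm (a::'a::complex_inner))\<^sup>2 + 2 * (norm b)\<^sup>2"
  using norm_add_sq[of a b] norm_diff_sq[of a b] by simp

lemma orth_from_min:
  fixes y z :: "'a::complex_inner"
  assumes min: "\<And>t. norm y \<le> norm (y - t *\<^sub>C z)"
  shows "cinner y z = 0"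
proof -
  define c where "c = cinner y z"
  define C where "C = (cmod c)\<^sup>2"
  define Z where "Z = (norm z)\<^sup>2"
  define s where "s = 1 / (Z + 1)"
  have Z0: "0 \<le> Z" and C0: "0 \<le> C" by (simp_all add: Z_def C_def)
  have s0: "0 < s" using Z0 by (simp add: s_def)
  have sZ: "s * Z \<le> 1" using Z0 by (simp add: s_def field_simps)
  define t where "t = complex_of_real s * cnj c"
  have "(norm (y - t *\<^sub>C z))\<^sup>2 = (norm y)\<^sup>2 + (norm (t *\<^sub>C z))\<^sup>2 - 2 * Re (cinner y (t *\<^sub>C z))"
    by (rule norm_diff_sq)
  also have "(norm (t *\<^sub>C z))\<^sup>2 = s * s * C * Z"
    using s0 by (simp add: norm_scaleC t_def C_def Z_def power_mult_distrib power2_eq_square norm_mult)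
  also have "Re (cinner y (t *\<^sub>C z)) = s * C"
  proof -
    have "cinner y (t *\<^sub>C z) = complex_of_real s * (cnj c * c)" by (simp add: cinner_scaleC_right t_def c_def)
    also have "\<dots> = complex_of_real (s * C)" by (simp add: cnj_mult_self C_def)
    finally show ?thesis by simp
  qed
  finally have eq: "(norm (y - t *\<^sub>C z))\<^sup>2 = (norm y)\<^sup>2 + s * s * C * Z - 2 * (s * C)" .
  have "(norm y)\<^sup>2 \<le> (norm (y - t *\<^sub>C z))\<^sup>2" using min[of t] by (simp add: power_mono)
  hence "0 \<le> s * (s * C * Z - 2 * C)" using eq by (simp add: algebra_simps)
  hence h: "0 \<le> s * C * Z - 2 * C" using s0 by (simp add: zero_le_mult_iff)
  have "C * (s * Z) \<le> C * 1" using sZ C0 by (rule mult_left_mono)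
  hence "C \<le> 0" using h by (simp add: algebra_simps)
  hence "C = 0" using C0 by simp
  thus ?thesis by (simp add: C_def c_def)
qed

lemma perp_exists:
  fixes V :: "'k::chilbert_space \<Rightarrow> 'k"
  assumes iso: "isometry V" and ns: "\<not> surj V"
  shows "\<exists>e0. norm e0 = 1 \<and> (\<forall>k. cinner e0 (V k) = 0)"
proof -
  have b: "bounded_clinear V" and nV: "\<And>x. norm (V x) = norm x" using iso by (auto simp: isometry_def)
  have bl: "bounded_linear V" using b by (rule bclin_bl)
  obtain x where x: "x \<notin> range V" using ns by auto
  define d where "d = Inf ((\<lambda>u. norm (x - V u)) ` UNIV)"
  have bdd: "bdd_below ((\<lambda>u. norm (x - V u)) ` UNIV)" by (rule bdd_belowI[of _ 0]) auto
  have d_le: "d \<le> norm (x - V u)" for u unfolding d_def by (rule cInf_lower[OF _ bdd]) auto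
  have d0: "0 \<le> d" unfolding d_def by (rule cInf_greatest) auto
  have "\<exists>u. norm (x - V u) < d + 1 / (Suc n)" for n
  proof (rule ccontr)
    assume "\<not> ?thesis"
    hence "\<forall>u. d + 1 / Suc n \<le> norm (x - V u)" by (simp add: not_less)
    hence "d + 1 / Suc n \<le> d" unfolding d_def by (intro cInf_greatest) auto
    thus False by simp
  qed
  then obtain u where u: "\<And>n. norm (x - V (u n)) < d + 1 / (Suc n)" by metis
  define \<delta> where "\<delta> n = 1 / real (Suc n)" for n
  have \<delta>0: "0 < \<delta> n" "\<delta> n \<le> 1" for n by (auto simp: \<delta>_def)
  have sqb: "(norm (x - V (u n)))\<^sup>2 \<le> d\<^sup>2 + (2 * d + 1) * \<delta> n" for n
  proof -
    have "(norm (x - V (u n)))\<^sup>2 \<le> (d + \<delta> n)\<^sup>2"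
      using u[of n] by (intro power_mono) (auto simp: \<delta>_def)
    also have "\<dots> = d\<^sup>2 + 2 * d * \<delta> n + \<delta> n * \<delta> n" by (simp add: power2_eq_square algebra_simps)
    also have "\<delta> n * \<delta> n \<le> \<delta> n" using \<delta>0[of n] by (simp add: mult_le_cancel_left1)
    finally show ?thesis by (simp add: algebra_simps)
  qed
  have key: "(norm (u m - u n))\<^sup>2 \<le> 2 * (2 * d + 1) * (\<delta> n + \<delta> m)" for n m
  proof -
    define a where "a = x - V (u n)"
    define b' where "b' = x - V (u m)"
    define w where "w = (1/2::real) *\<^sub>R (u n + u m)"
    have ab: "a + b' = 2 *\<^sub>R (x - V w)"
      by (simp add: a_def b'_def w_def linear_scale[OF bounded_linear.linear[OF bl]] linear_add[OF bounded_linear.linear[OF bl]] linear_diff[OF bounded_linear.linear[OF bl]] algebra_simps scaleR_2)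
    have "(norm (a + b'))\<^sup>2 = 4 * (norm (x - V w))\<^sup>2" by (simp add: ab power2_eq_square)
    moreover have "d\<^sup>2 \<le> (norm (x - V w))\<^sup>2" using d_le[of w] d0 by (simp add: power_mono)
    moreover have "a - b' = V (u m - u n)" by (simp add: a_def b'_def linear_diff[OF bounded_linear.linear[OF bl]])
    hence "norm (a - b') = norm (u m - u n)" by (simp add: nV)
    moreover note parallelogram[of a b'] sqb[of n] sqb[of m]
    ultimately show ?thesis by (simp add: a_def b'_def algebra_simps)
  qed
  have "Cauchy u"
  proof (rule metric_CauchyI)
    fix e :: real assume e: "0 < e"
    obtain N :: nat where N: "4 * (2 * d + 1) / (e * e) < real N" using reals_Archimedean2 by blast
    have "dist (u m) (u n) < e" if "N \<le> m" "N \<le> n" for m n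
    proof -
      have dN: "\<delta> k \<le> 1 / real (Suc N)" if "N \<le> k" for k
        using that by (simp add: \<delta>_def frac_le)
      have "(norm (u m - u n))\<^sup>2 \<le> 2 * (2 * d + 1) * (\<delta> n + \<delta> m)" by (rule key)
      also have "\<dots> \<le> 2 * (2 * d + 1) * (2 / real (Suc N))"
        using dN[OF \<open>N \<le> m\<close>] dN[OF \<open>N \<le> n\<close>] d0 by (intro mult_left_mono) auto
      also have "\<dots> < e * e"
      proof -
        have "4 * (2 * d + 1) < e * e * real (Suc N)" using N e
          by (simp add: field_simps) (smt (verit) mult_pos_pos)
        thus ?thesis by (simp add: field_simps)
      qed
      finally have "(norm (u m - u n))\<^sup>2 < e\<^sup>2" by (simp add: power2_eq_square)
      hence "norm (u m - u n) < e" using e by (simp add: power_less_imp_less_base)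
      thus ?thesis by (simp add: dist_norm)
    qed
    thus "\<exists>M. \<forall>m\<ge>M. \<forall>n\<ge>M. dist (u m) (u n) < e" by blast
  qed
  then obtain u0 where lim: "u \<longlonglongrightarrow> u0" using Cauchy_convergent_iff convergent_def by blast
  have lim2: "(\<lambda>n. norm (x - V (u n))) \<longlonglongrightarrow> norm (x - V u0)"
    by (intro tendsto_intros bounded_linear.tendsto[OF bl] lim)
  have "(\<lambda>n. d + inverse (real (Suc n))) \<longlonglongrightarrow> d + 0"
    by (intro tendsto_add tendsto_const LIMSEQ_inverse_real_of_nat)
  hence limd: "(\<lambda>n. d + \<delta> n) \<longlonglongrightarrow> d" by (simp add: \<delta>_def inverse_eq_divide)
  have "norm (x - V u0) \<le> d"
  proof (rule LIMSEQ_le[OF lim2 limd])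
    show "\<exists>N. \<forall>n\<ge>N. norm (x - V (u n)) \<le> d + \<delta> n"
      using u by (auto simp: \<delta>_def intro: less_imp_le)
  qed
  hence ny: "norm (x - V u0) = d" using d_le[of u0] by simp
  define y where "y = x - V u0"
  have y0: "y \<noteq> 0" using x by (auto simp: y_def)
  have orth: "cinner y (V k) = 0" for k
  proof (rule orth_from_min)
    fix t
    have "y - t *\<^sub>C V k = x - V (u0 + t *\<^sub>C k)"
      by (simp add: y_def bclin_add[OF b] bclin_scaleC[OF b])
    hence "norm (y - t *\<^sub>C V k) = norm (x - V (u0 + t *\<^sub>C k))" by simp
    thus "norm y \<le> norm (y - t *\<^sub>C V k)" using d_le[of "u0 + t *\<^sub>C k"] ny by (simp only: y_def)
  qed
  define e0 where "e0 = (1 / norm y) *\<^sub>R y"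
  have "norm e0 = 1" using y0 by (simp add: e0_def)
  moreover have "cinner e0 (V k) = 0" for k by (simp add: e0_def cinner_scaleR_left orth)
  ultimately show ?thesis by blast
qed



definition cser :: "(nat \<Rightarrow> 'k::complex_inner) \<Rightarrow> (nat \<Rightarrow> 's::chilbert_space) \<Rightarrow> 'k \<Rightarrow> 's" where
  "cser u w k = (\<Sum>n. cinner (u n) k *\<^sub>C w n)"

lemma bl_scaleC: "bounded_linear (\<lambda>v::'a::complex_inner. a *\<^sub>C v)"
  by (rule bounded_linear_intro[where K="cmod a"])
     (auto simp: scaleC_add_right scaleC_scaleR_commute norm_scaleC mult.commute)

lemma coef_summable:
  assumes "orthonormal u"
  shows "summable (\<lambda>n. (cmod (cinner (u n) k))\<^sup>2)"
  by (rule summableI_nonneg_bounded[where x="(norm k)\<^sup>2"]) (auto intro: bessel[OF assms])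

lemma ser_summable:
  assumes u: "orthonormal u" and w: "orthonormal (w :: nat \<Rightarrow> 's::chilbert_space)"
  shows "summable (\<lambda>n. cinner (u n) k *\<^sub>C w n)"
  unfolding summable_Cauchy
proof (intro allI impI)
  fix e :: real assume e: "0 < e"
  have "e * e > 0" using e by simp
  then obtain N where N: "\<And>m n. m \<ge> N \<Longrightarrow> norm (\<Sum>i\<in>{m..<n}. (cmod (cinner (u i) k))\<^sup>2) < e * e"
    using coef_summable[OF u, of k] unfolding summable_Cauchy by metis
  have "norm (\<Sum>i\<in>{m..<n}. cinner (u i) k *\<^sub>C w i) < e" if "m \<ge> N" for m n
  proof -
    have "(norm (\<Sum>i\<in>{m..<n}. cinner (u i) k *\<^sub>C w i))\<^sup>2 = (\<Sum>i\<in>{m..<n}. (cmod (cinner (u i) k))\<^sup>2)"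
      by (rule orthonormal_norm_sum[OF w])
    also have "\<dots> \<le> norm (\<Sum>i\<in>{m..<n}. (cmod (cinner (u i) k))\<^sup>2)" by simp
    also have "\<dots> < e\<^sup>2" using N[OF that, of n] by (simp add: power2_eq_square)
    finally show ?thesis using e by (simp add: power_less_imp_less_base)
  qed
  thus "\<exists>N. \<forall>m\<ge>N. \<forall>n. norm (\<Sum>i\<in>{m..<n}. cinner (u i) k *\<^sub>C w i) < e" by blast
qed

lemma ser_norm:
  assumes u: "orthonormal u" and w: "orthonormal (w :: nat \<Rightarrow> 's::chilbert_space)"
  shows "norm (cser u w k) \<le> norm k"
proof -
  have lim: "(\<lambda>N. norm (\<Sum>n<N. cinner (u n) k *\<^sub>C w n)) \<longlonglongrightarrow> norm (cser u w k)"
    unfolding cser_def by (intro tendsto_norm summable_LIMSEQ ser_summable u w)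
  have "norm (\<Sum>n<N. cinner (u n) k *\<^sub>C w n) \<le> norm k" for N
  proof -
    have "(norm (\<Sum>n<N. cinner (u n) k *\<^sub>C w n))\<^sup>2 = (\<Sum>n<N. (cmod (cinner (u n) k))\<^sup>2)"
      by (rule orthonormal_norm_sum[OF w])
    also have "\<dots> \<le> (norm k)\<^sup>2" by (rule bessel[OF u])
    finally show ?thesis using power2_le_imp_le by auto
  qed
  thus ?thesis using lim by (intro LIMSEQ_le_const2[OF lim]) auto
qed

lemma ser_add:
  assumes u: "orthonormal u" and w: "orthonormal (w :: nat \<Rightarrow> 's::chilbert_space)"
  shows "cser u w (x + y) = cser u w x + cser u w y"
  unfolding cser_def
  by (simp add: suminf_add[OF ser_summable[OF u w] ser_summable[OF u w]] cinner_add_right scaleC_add_left)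

lemma ser_scaleC:
  assumes u: "orthonormal u" and w: "orthonormal (w :: nat \<Rightarrow> 's::chilbert_space)"
  shows "cser u w (a *\<^sub>C x) = a *\<^sub>C cser u w x"
  unfolding cser_def
  by (simp add: bounded_linear.suminf[OF bl_scaleC ser_summable[OF u w]] cinner_scaleC_right scaleC_scaleC)

lemma ser_bclin:
  assumes u: "orthonormal u" and w: "orthonormal (w :: nat \<Rightarrow> 's::chilbert_space)"
  shows "bounded_clinear (cser u w)"
  unfolding bounded_clinear_def
proof (intro conjI allI)
  show "bounded_linear (cser u w)"
    by (rule bounded_linear_intro[where K=1])
       (auto simp: ser_add[OF u w] scaleR_scaleC ser_scaleC[OF u w] ser_norm[OF u w])
qed (rule ser_scaleC[OF u w])

lemma ser_basis:
  assumes u: "orthonormal u" and w: "orthonormal (w :: nat \<Rightarrow> 's::chilbert_space)"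
  shows "cser u w (u m) = w m"
proof -
  have "(\<lambda>n. cinner (u n) (u m) *\<^sub>C w n) = (\<lambda>n. if n = m then w n else 0)"
    using u by (auto simp: orthonormal_def scaleC_one)
  thus ?thesis unfolding cser_def using sums_single[of m w] sums_unique by metis
qed



lemma isometry_closed_range:
  fixes S :: "'s::chilbert_space \<Rightarrow> 's"
  assumes iso: "isometry S"
  shows "closed (range S)"
proof -
  have b: "bounded_clinear S" and nS: "\<And>x. norm (S x) = norm x" using iso by (auto simp: isometry_def)
  have bl: "bounded_linear S" using b by (rule bclin_bl)
  have dS: "dist (S a) (S c) = dist a c" for a c
    by (simp add: dist_norm bclin_diff[OF b, symmetric] nS)
  show ?thesis unfolding closed_sequential_limits
  proof (intro allI impI, elim conjE)
    fix y l assume yr: "\<forall>n. y n \<in> range S" and yl: "y \<longlonglongrightarrow> l"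
    have "\<forall>n. \<exists>z. y n = S z" using yr by auto
    then obtain x where x: "\<And>n. y n = S (x n)" by metis
    have "Cauchy y" using yl by (rule LIMSEQ_imp_Cauchy)
    hence "Cauchy x" unfolding Cauchy_def by (simp add: x dS)
    then obtain x0 where "x \<longlonglongrightarrow> x0" using Cauchy_convergent_iff convergent_def by blast
    hence "(\<lambda>n. S (x n)) \<longlonglongrightarrow> S x0" by (rule bounded_linear.tendsto[OF bl])
    hence "y \<longlonglongrightarrow> S x0" by (simp add: x[abs_def])
    hence "l = S x0" using yl LIMSEQ_unique by blast
    thus "l \<in> range S" by simp
  qed
qed

lemma shift_not_surj:
  fixes S :: "'s::chilbert_space \<Rightarrow> 's"
  assumes "simple_unilateral_shift S"
  shows "\<not> surj S"
proof
  assume su: "surj S"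
  have iso: "isometry S" using assms by (simp add: simple_unilateral_shift_def)
  obtain e where e1: "norm e = 1" and orth: "\<And>n m. n \<noteq> m \<Longrightarrow> cinner ((S ^^ n) e) ((S ^^ m) e) = 0"
    and dense: "closure (cspan (range (\<lambda>n. (S ^^ n) e))) = UNIV"
    using assms unfolding simple_unilateral_shift_def by blast
  obtain x where ex: "e = S x" using su surjD[of S e] by blast
  have ox: "cinner x ((S ^^ n) e) = 0" for n
  proof -
    have "cinner x ((S ^^ n) e) = cinner (S x) (S ((S ^^ n) e))" by (simp add: isometry_cinner[OF iso])
    also have "\<dots> = cinner ((S ^^ 0) e) ((S ^^ Suc n) e)" by (simp add: ex)
    also have "\<dots> = 0" by (rule orth) simp
    finally show ?thesis .
  qed
  have osp: "cinner x v = 0" if vin: "v \<in> cspan (range (\<lambda>n. (S ^^ n) e))" for v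
  proof -
    obtain F c where v: "v = (\<Sum>a\<in>F. c a *\<^sub>C a)" and F: "F \<subseteq> range (\<lambda>n. (S ^^ n) e)"
      using vin unfolding cspan_def by blast
    have "cinner x v = (\<Sum>a\<in>F. c a * cinner x a)" by (simp add: v cinner_sum_right cinner_scaleC_right)
    also have "\<dots> = 0" using F ox by (intro sum.neutral) auto
    finally show ?thesis .
  qed
  have "x \<in> closure (cspan (range (\<lambda>n. (S ^^ n) e)))" using dense by simp
  then obtain f where fin: "\<And>n. f n \<in> cspan (range (\<lambda>n. (S ^^ n) e))" and fl: "f \<longlonglongrightarrow> x"
    unfolding closure_sequential by blast
  have "(\<lambda>n. norm (x - f n)) \<longlonglongrightarrow> norm (x - x)" by (intro tendsto_intros fl)
  hence l0: "(\<lambda>n. norm (x - f n)) \<longlonglongrightarrow> 0" by simp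
  have "norm x \<le> norm (x - f n)" for n
  proof -
    have "(norm (x - f n))\<^sup>2 = (norm x)\<^sup>2 + (norm (f n))\<^sup>2" using norm_diff_sq[of x "f n"] osp[OF fin] by simp
    hence "(norm x)\<^sup>2 \<le> (norm (x - f n))\<^sup>2" by simp
    thus ?thesis using power2_le_imp_le by auto
  qed
  hence "norm x \<le> 0" using l0 by (intro LIMSEQ_le_const[OF l0]) auto
  hence "x = 0" by simp
  moreover have "S 0 = 0" by (rule bclin_0) (use iso in \<open>simp add: isometry_def\<close>)
  ultimately have "e = 0" using ex by simp
  thus False using e1 by simp
qed

lemma range_clinear_sum:
  assumes P: "bounded_clinear P" and "finite F" and "F \<subseteq> range P"
  shows "(\<Sum>a\<in>F. c a *\<^sub>C a) \<in> range P"
  using assms(2,3)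
proof (induction F rule: finite_induct)
  case empty
  then show ?case using bclin_0[OF P] by (metis rangeI sum.empty)
next
  case (insert a F)
  then obtain k ka where k: "(\<Sum>a\<in>F. c a *\<^sub>C a) = P k" and ka: "a = P ka" by auto
  have "(\<Sum>a\<in>insert a F. c a *\<^sub>C a) = P (c a *\<^sub>C ka + k)"
    using insert(1,2) by (simp add: k ka bclin_add[OF P] bclin_scaleC[OF P])
  thus ?case by simp
qed



theorem lemma2p1:
  fixes T :: "'a::chilbert_space \<Rightarrow> 'a"
    and X :: "'a \<Rightarrow> 'k::chilbert_space" and V :: "'k \<Rightarrow> 'k"
    and S :: "'s::chilbert_space \<Rightarrow> 's"
  assumes "power_bounded T"
    and "simple_unilateral_shift S"
    and "isometric_asymptote T X V TYPE('s)"
  shows "T \<prec>\<^sub>d S \<longleftrightarrow> \<not> unitary V"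
proof -
  have isoV: "isometry V" and bX: "bounded_clinear X" and dX: "closure (range X) = UNIV"
    and XT: "X \<circ> T = V \<circ> X"
    and univ: "\<And>(W::'s \<Rightarrow> 's) (Y::'a \<Rightarrow> 's). isometry W \<Longrightarrow> bounded_clinear Y \<Longrightarrow> Y \<circ> T = W \<circ> Y \<Longrightarrow>
        (\<exists>!Z. bounded_clinear Z \<and> Z \<circ> V = W \<circ> Z \<and> Y = Z \<circ> X)"
    using assms(3) unfolding isometric_asymptote_def by blast+
  have isoS: "isometry S" using assms(2) by (simp add: simple_unilateral_shift_def)
  have bS: "bounded_clinear S" using isoS by (simp add: isometry_def)
  obtain e where e1: "norm e = 1" and orthS: "\<And>n m. n \<noteq> m \<Longrightarrow> cinner ((S ^^ n) e) ((S ^^ m) e) = 0"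
    and denseS: "closure (cspan (range (\<lambda>n. (S ^^ n) e))) = UNIV"
    using assms(2) unfolding simple_unilateral_shift_def by blast
  show ?thesis
  proof
    assume "T \<prec>\<^sub>d S"
    then obtain Y where bY: "bounded_clinear Y" and dY: "closure (range Y) = UNIV" and YT: "Y \<circ> T = S \<circ> Y"
      unfolding dense_intertwined_def by blast
    obtain Z where bZ: "bounded_clinear Z" and ZV: "Z \<circ> V = S \<circ> Z" and YZ: "Y = Z \<circ> X"
      using univ[OF isoS bY YT] by blast
    show "\<not> unitary V"
    proof
      assume "unitary V"
      hence sV: "surj V" by (simp add: unitary_def)
      have "range Y \<subseteq> range S"
      proof
        fix y assume "y \<in> range Y"
        then obtain a where "y = Z (X a)" using YZ by auto
        moreover obtain v where "X a = V v" using sV surjD[of V "X a"] by blast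
        ultimately have "y = S (Z v)" using ZV by (metis comp_apply)
        thus "y \<in> range S" by simp
      qed
      hence "closure (range Y) \<subseteq> range S"
        using isometry_closed_range[OF isoS] by (simp add: closure_minimal)
      hence "surj S" using dY by auto
      thus False using shift_not_surj[OF assms(2)] by simp
    qed
  next
    assume "\<not> unitary V"
    hence nsV: "\<not> surj V" using isoV by (simp add: unitary_def)
    obtain e0 where e01: "norm e0 = 1" and perp: "\<And>k. cinner e0 (V k) = 0"
      using perp_exists[OF isoV nsV] by blast
    define u where "u n = (V ^^ n) e0" for n
    define w where "w n = (S ^^ n) e" for n
    have ou: "orthonormal u" unfolding u_def[abs_def] by (rule orthonormal_iter[OF isoV e01 perp])
    have ow: "orthonormal w" unfolding w_def[abs_def] by (rule orthonormal_powers[OF isoS e1 orthS])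
    define P where "P = cser u w"
    have bP: "bounded_clinear P" unfolding P_def by (rule ser_bclin[OF ou ow])
    have PV: "P (V k) = S (P k)" for k
    proof -
      define f where "f n = cinner (u n) (V k) *\<^sub>C w n" for n
      have sf: "summable f" unfolding f_def by (rule ser_summable[OF ou ow])
      have f0: "f 0 = 0" by (simp add: f_def u_def perp)
      have fS: "f (Suc n) = S (cinner (u n) k *\<^sub>C w n)" for n
        by (simp add: f_def u_def w_def isometry_cinner[OF isoV] bclin_scaleC[OF bS])
      have "P (V k) = suminf f" by (simp add: P_def cser_def f_def[abs_def])
      also have "\<dots> = (\<Sum>n. f (Suc n))" using suminf_split_head[OF sf] f0 by simp
      also have "\<dots> = (\<Sum>n. S (cinner (u n) k *\<^sub>C w n))" by (simp add: fS)
      also have "\<dots> = S (P k)" unfolding P_def cser_def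
        by (rule bounded_linear.suminf[OF bclin_bl[OF bS] ser_summable[OF ou ow], symmetric])
      finally show ?thesis .
    qed
    define Y where "Y = P \<circ> X"
    have bY: "bounded_clinear Y" unfolding Y_def by (rule bclin_comp[OF bP bX])
    have YT: "Y \<circ> T = S \<circ> Y"
    proof
      fix a
      have "X (T a) = V (X a)" using XT by (metis comp_apply)
      thus "(Y \<circ> T) a = (S \<circ> Y) a" by (simp add: Y_def PV)
    qed
    have "P ` closure (range X) \<subseteq> closure (range Y)"
    proof (rule image_closure_subset)
      show "continuous_on (closure (range X)) P"
        by (rule linear_continuous_on[OF bclin_bl[OF bP]])
      show "P ` range X \<subseteq> closure (range Y)" using closure_subset by (fastforce simp: Y_def)
    qed simp
    hence rP: "range P \<subseteq> closure (range Y)" using dX by simp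
    have "cspan (range w) \<subseteq> range P"
    proof
      fix v assume "v \<in> cspan (range w)"
      then obtain F c where v: "v = (\<Sum>a\<in>F. c a *\<^sub>C a)" and fin: "finite F" and F: "F \<subseteq> range w"
        unfolding cspan_def by blast
      have "range w \<subseteq> range P" using ser_basis[OF ou ow] by (auto simp: P_def) (metis rangeI)
      thus "v \<in> range P" using range_clinear_sum[OF bP fin] F v by blast
    qed
    hence "cspan (range w) \<subseteq> closure (range Y)" using rP by blast
    hence "closure (cspan (range w)) \<subseteq> closure (range Y)" by (simp add: closure_minimal)
    hence dY: "closure (range Y) = UNIV" using denseS by (auto simp: w_def[abs_def])
    show "T \<prec>\<^sub>d S" unfolding dense_intertwined_def using bY dY YT by blast
  qed
qed

end
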